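(* Let $\mathbf x_1,\dots,\mathbf x_l\in\mathbb{R}^n$, $y_1,\dots,y_l\in\mathbb{R}$, let $\mathbf X\in\mathbb{R}^{l\times n}$ have $i$-th row $\mathbf x_i^T$ and $\mathbf y=(y_1,\dots,y_l)^T$. For $C>0$ let $\mathbf w^*(C)$ be the optimal solution of the least absolute deviations problem $$\min_{\mathbf w}\tfrac12\|\mathbf w\|^2+C\sum_{i=1}^l|y_i-\mathbf w^T\mathbf x_i|,$$ and $\theta^*(C)$ an optimal solution of its dual $\min_{\theta\in[-1,1]^l}\frac C2\|\mathbf X^T\theta\|^2-\langle\mathbf y,\theta\rangle$. Let $0<C_1<\dots<C_{\mathcal K}$ and suppose $\mathbf w^*(C_k)$ is known for some integer $1\le k<\mathcal K$. Then $[\theta^*(C_{k+1})]_i=-1$ (i.e., $i\in\mathcal R$) if $$\tfrac{C_{k+1}+C_k}{2C_k}\langle\mathbf w^*(C_k),\mathbf x_i\rangle-\tfrac{C_{k+1}-C_k}{2C_k}\|\mathbf w^*(C_k)\|\,\|\mathbf x_i\|>y_i,$$ and $[\theta^*(C_{k+1})]_i=1$ (i.e., $i\in\mathcal L$) if $$\tfrac{C_{k+1}+C_k}{2C_k}\langle\mathbf w^*(C_k),\mathbf x_i\rangle+\tfrac{C_{k+1}-C_k}{2C_k}\|\mathbf w^*(C_k)\|\,\|\mathbf x_i\|<y_i.$$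
   Context: Primal and dual solutions satisfy $\mathbf w^*(C)=C\mathbf X^T\theta^*(C)$. At parameter $C=C_{k+1}$: $\mathcal R=\{i:\langle\mathbf w^*(C),\mathbf x_i\rangle>y_i\}$ and $\mathcal L=\{i:\langle\mathbf w^*(C),\mathbf x_i\rangle<y_i\}$. *)

theory Defs
  imports "HOL-Analysis.Analysis"
begin

text \<open>Data: samples x i in R^n (type real^'n) and responses y i, indexed by a finite
type 'l (so l = CARD('l)).  X^T theta is the vector sum over i of theta i *R x i.\<close>

definition XT :: "('l::finite \<Rightarrow> real^'n) \<Rightarrow> ('l \<Rightarrow> real) \<Rightarrow> real^'n" where
  "XT x \<theta> = (\<Sum>i\<in>UNIV. \<theta> i *\<^sub>R x i)"

definition lad_primal ::
  "('l::finite \<Rightarrow> real^'n) \<Rightarrow> ('l \<Rightarrow> real) \<Rightarrow> real \<Rightarrow> real^'n \<Rightarrow> real" where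
  "lad_primal x y C w = (1/2) * (norm w)^2 + C * (\<Sum>i\<in>UNIV. \<bar>y i - w \<bullet> x i\<bar>)"

definition lad_dual ::
  "('l::finite \<Rightarrow> real^'n) \<Rightarrow> ('l \<Rightarrow> real) \<Rightarrow> real \<Rightarrow> ('l \<Rightarrow> real) \<Rightarrow> real" where
  "lad_dual x y C \<theta> = (C/2) * (norm (XT x \<theta>))^2 - (\<Sum>i\<in>UNIV. y i * \<theta> i)"

definition dual_feasible :: "('l::finite \<Rightarrow> real) \<Rightarrow> bool" where
  "dual_feasible \<theta> \<longleftrightarrow> (\<forall>i. -1 \<le> \<theta> i \<and> \<theta> i \<le> 1)"

definition primal_opt ::
  "('l::finite \<Rightarrow> real^'n) \<Rightarrow> ('l \<Rightarrow> real) \<Rightarrow> real \<Rightarrow> real^'n \<Rightarrow> bool" where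
  "primal_opt x y C w \<longleftrightarrow> (\<forall>v. lad_primal x y C w \<le> lad_primal x y C v)"

definition dual_opt ::
  "('l::finite \<Rightarrow> real^'n) \<Rightarrow> ('l \<Rightarrow> real) \<Rightarrow> real \<Rightarrow> ('l \<Rightarrow> real) \<Rightarrow> bool" where
  "dual_opt x y C \<theta> \<longleftrightarrow> dual_feasible \<theta> \<and>
     (\<forall>\<eta>. dual_feasible \<eta> \<longrightarrow> lad_dual x y C \<theta> \<le> lad_dual x y C \<eta>)"

end

theory Submission
  imports Defs
begin

lemma norm_lin:
  fixes a b :: "'a::real_inner"
  shows "(norm (a + t *\<^sub>R b))^2 = (norm a)^2 + 2 * t * inner a b + t^2 * (norm b)^2"
  unfolding power2_norm_eq_inner
  by (simp add: inner_add inner_commute algebra_simps power2_eq_square)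

lemma quad_lemma:
  fixes g a :: real
  assumes "a \<ge> 0" and "\<And>t. 0 < t \<Longrightarrow> t \<le> 1 \<Longrightarrow> t * g + t^2 * a \<ge> 0"
  shows "g \<ge> 0"
proof (rule ccontr)
  assume "\<not> g \<ge> 0"
  hence g: "g < 0" by simp
  define t where "t = min 1 (-g/(2*a+1))"
  have "0 < -g/(2*a+1)" using g assms(1) by (intro divide_pos_pos) auto
  hence t0: "0 < t" by (simp add: t_def)
  have t1: "t \<le> 1" by (simp add: t_def)
  have tl: "t \<le> -g/(2*a+1)" by (simp add: t_def)
  have p: "0 < 2*a+1" using assms(1) by simp
  have "t * (2*a+1) \<le> (-g/(2*a+1)) * (2*a+1)" using mult_right_mono[OF tl, of "2*a+1"] p by simp
  also have "\<dots> = -g" using p by simp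
  finally have m: "t * (2*a+1) \<le> -g" .
  have "t * (2*a+1) = 2*(t*a) + t" by (simp add: algebra_simps)
  moreover have "t*a \<ge> 0" using t0 assms(1) by simp
  ultimately have "t * a < -g" using m t0 by linarith
  hence "g + t * a < 0" by simp
  hence "t * (g + t*a) < 0" using t0 by (simp add: mult_pos_neg)
  moreover have "t * g + t^2 * a = t * (g + t*a)" by (simp add: algebra_simps power2_eq_square)
  ultimately show False using assms(2)[OF t0 t1] by simp
qed

lemma XT_inner:
  "inner u (XT x d) = (\<Sum>i\<in>UNIV. d i * inner u (x i))"
  by (simp add: XT_def inner_sum_right)

lemma XT_lin:
  "XT x (\<lambda>i. a i + t * b i) = XT x a + t *\<^sub>R XT x b"
  by (simp add: XT_def scaleR_add_left sum.distrib scaleR_sum_right)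

lemma dual_VI:
  assumes "dual_opt x y C \<theta>" and "C > 0" and "dual_feasible \<eta>"
  shows "(\<Sum>i\<in>UNIV. (inner (C *\<^sub>R XT x \<theta>) (x i) - y i) * (\<eta> i - \<theta> i)) \<ge> 0"
proof -
  define d where "d = (\<lambda>i. \<eta> i - \<theta> i)"
  define u where "u = C *\<^sub>R XT x \<theta>"
  define g where "g = (\<Sum>i\<in>UNIV. (inner u (x i) - y i) * d i)"
  have th: "dual_feasible \<theta>" using assms(1) by (simp add: dual_opt_def)
  show ?thesis
  proof -
    have "g \<ge> 0"
    proof (rule quad_lemma[where a = "C/2 * (norm (XT x d))^2"])
      show "0 \<le> C/2 * (norm (XT x d))^2" using assms(2) by simp
    next
      fix t :: real assume t0: "0 < t" and t1: "t \<le> 1"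
      have feas: "dual_feasible (\<lambda>i. \<theta> i + t * d i)"
        unfolding dual_feasible_def
      proof
        fix i
        have a: "-1 \<le> \<theta> i" "\<theta> i \<le> 1" "-1 \<le> \<eta> i" "\<eta> i \<le> 1"
          using th assms(3) by (auto simp: dual_feasible_def)
        have "\<theta> i + t * d i = (1-t) * \<theta> i + t * \<eta> i" by (simp add: d_def algebra_simps)
        moreover have "(1-t) * \<theta> i \<ge> (1-t) * -1" "t * \<eta> i \<ge> t * -1"
          "(1-t) * \<theta> i \<le> (1-t) * 1" "t * \<eta> i \<le> t * 1"
          using a t0 t1 by (intro mult_left_mono; simp)+
        ultimately show "-1 \<le> \<theta> i + t * d i \<and> \<theta> i + t * d i \<le> 1" by simp
      qed
      have "lad_dual x y C \<theta> \<le> lad_dual x y C (\<lambda>i. \<theta> i + t * d i)"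
        using assms(1) feas by (simp add: dual_opt_def)
      also have "lad_dual x y C (\<lambda>i. \<theta> i + t * d i)
          = lad_dual x y C \<theta> + t * g + t^2 * (C/2 * (norm (XT x d))^2)"
      proof -
        have n: "(norm (XT x \<theta> + t *\<^sub>R XT x d))^2 = (norm (XT x \<theta>))^2
            + 2 * t * inner (XT x \<theta>) (XT x d) + t^2 * (norm (XT x d))^2"
          by (rule norm_lin)
        have i: "C * inner (XT x \<theta>) (XT x d) = (\<Sum>i\<in>UNIV. d i * inner u (x i))"
          unfolding u_def XT_inner inner_scaleR_left by (simp add: sum_distrib_left mult.left_commute)
        have gg: "g = (\<Sum>i\<in>UNIV. d i * inner u (x i)) - (\<Sum>i\<in>UNIV. y i * d i)"
          by (simp add: g_def algebra_simps sum_subtractf)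
        show ?thesis
          unfolding lad_dual_def XT_lin n gg i[symmetric]
          by (simp add: algebra_simps sum.distrib sum_distrib_left)
      qed
      finally show "0 \<le> t * g + t^2 * (C/2 * (norm (XT x d))^2)" by simp
    qed
    thus ?thesis by (simp add: g_def u_def d_def)
  qed
qed

lemma primal_VI:
  assumes "primal_opt x y C w" and "C > 0"
  shows "C * ((\<Sum>i\<in>UNIV. \<bar>y i - w \<bullet> x i\<bar>) - (\<Sum>i\<in>UNIV. \<bar>y i - v \<bullet> x i\<bar>)) \<le> inner w (v - w)"
proof -
  define L where "L = (\<lambda>v. (\<Sum>i\<in>UNIV. \<bar>y i - v \<bullet> x i\<bar>))"
  define g where "g = inner w (v - w) - C * (L w - L v)"
  have "g \<ge> 0"
  proof (rule quad_lemma[where a = "(norm (v - w))^2 / 2"])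
    show "0 \<le> (norm (v - w))^2 / 2" by simp
  next
    fix t :: real assume t0: "0 < t" and t1: "t \<le> 1"
    define wt where "wt = w + t *\<^sub>R (v - w)"
    have conv: "L wt \<le> (1-t) * L w + t * L v"
    proof -
      have "\<And>i. \<bar>y i - wt \<bullet> x i\<bar> \<le> (1-t) * \<bar>y i - w \<bullet> x i\<bar> + t * \<bar>y i - v \<bullet> x i\<bar>"
      proof -
        fix i
        have "y i - wt \<bullet> x i = (1-t) * (y i - w \<bullet> x i) + t * (y i - v \<bullet> x i)"
          by (simp add: wt_def algebra_simps inner_diff_left)
        hence "\<bar>y i - wt \<bullet> x i\<bar> \<le> \<bar>(1-t) * (y i - w \<bullet> x i)\<bar> + \<bar>t * (y i - v \<bullet> x i)\<bar>"
          by simp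
        thus "\<bar>y i - wt \<bullet> x i\<bar> \<le> (1-t) * \<bar>y i - w \<bullet> x i\<bar> + t * \<bar>y i - v \<bullet> x i\<bar>"
          using t0 t1 by (simp add: abs_mult)
      qed
      hence "L wt \<le> (\<Sum>i\<in>UNIV. (1-t) * \<bar>y i - w \<bullet> x i\<bar> + t * \<bar>y i - v \<bullet> x i\<bar>)"
        unfolding L_def by (rule sum_mono)
      thus ?thesis by (simp add: L_def sum.distrib sum_distrib_left)
    qed
    have n: "(norm wt)^2 = (norm w)^2 + 2 * t * inner w (v - w) + t^2 * (norm (v - w))^2"
      unfolding wt_def by (rule norm_lin)
    have "(1/2) * (norm w)^2 + C * L w \<le> (1/2) * (norm wt)^2 + C * L wt"
      using assms(1) by (simp add: primal_opt_def lad_primal_def L_def)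
    also have "C * L wt \<le> C * ((1-t) * L w + t * L v)"
      using conv assms(2) by simp
    finally show "0 \<le> t * g + t^2 * ((norm (v - w))^2 / 2)"
      unfolding n g_def by (simp add: algebra_simps power2_eq_square)
  qed
  thus ?thesis by (simp add: g_def L_def)
qed

lemma ball_id:
  fixes u a b :: "'a::real_inner"
  shows "(norm (u - (1/2) *\<^sub>R (a + b)))^2 = inner (u - a) (u - b) + (norm (a - b))^2 / 4"
  unfolding power2_norm_eq_inner
  by (simp add: inner_add inner_diff inner_commute field_simps)

lemma Cs_ge:
  fixes Cs :: "nat \<Rightarrow> real"
  assumes "\<forall>j. 1 \<le> j \<and> j < K \<longrightarrow> Cs j < Cs (Suc j)"
  shows "1 \<le> j \<Longrightarrow> j \<le> K \<Longrightarrow> Cs 1 \<le> Cs j"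
proof (induction j)
  case 0 thus ?case by simp
next
  case (Suc j)
  show ?case
  proof (cases "j = 0")
    case True thus ?thesis by simp
  next
    case False
    hence "Cs 1 \<le> Cs j" using Suc by simp
    moreover have "Cs j < Cs (Suc j)" using assms False Suc.prems by simp
    ultimately show ?thesis by simp
  qed
qed

lemma VI_single:
  fixes f \<theta> :: "'l::finite \<Rightarrow> real"
  assumes "\<forall>\<eta>. dual_feasible \<eta> \<longrightarrow> (\<Sum>j\<in>UNIV. f j * (\<eta> j - \<theta> j)) \<ge> 0"
    and "-1 \<le> c" "c \<le> 1" "dual_feasible \<theta>"
  shows "f i * (c - \<theta> i) \<ge> 0"
proof -
  have fe: "dual_feasible (\<theta>(i := c))" using assms(2-4) by (auto simp: dual_feasible_def)
  have "(\<Sum>j\<in>UNIV. f j * ((\<theta>(i := c)) j - \<theta> j)) = (\<Sum>j\<in>UNIV. if j = i then f i * (c - \<theta> i) else 0)"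
    by (rule sum.cong) auto
  also have "\<dots> = f i * (c - \<theta> i)" by simp
  finally show ?thesis using assms(1) fe by metis
qed

theorem corollary6:
  fixes x :: "'l::finite \<Rightarrow> real^'n" and y :: "'l \<Rightarrow> real"
    and Cs :: "nat \<Rightarrow> real" and K k :: nat
    and w :: "real^'n" and \<theta> :: "'l \<Rightarrow> real"
  assumes "0 < Cs 1"
    and "\<forall>j. 1 \<le> j \<and> j < K \<longrightarrow> Cs j < Cs (Suc j)"
    and "1 \<le> k" and "k < K"
    and "primal_opt x y (Cs k) w"
    and "dual_opt x y (Cs (Suc k)) \<theta>"
  shows "\<forall>i.
      ((Cs (Suc k) + Cs k) / (2 * Cs k) * (w \<bullet> x i)
         - (Cs (Suc k) - Cs k) / (2 * Cs k) * norm w * norm (x i) > y i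
         \<longrightarrow> \<theta> i = -1)
    \<and> ((Cs (Suc k) + Cs k) / (2 * Cs k) * (w \<bullet> x i)
         + (Cs (Suc k) - Cs k) / (2 * Cs k) * norm w * norm (x i) < y i
         \<longrightarrow> \<theta> i = 1)"
proof -
  define C where "C = Cs k"
  define C' where "C' = Cs (Suc k)"
  have Cpos: "0 < C" using Cs_ge[OF assms(2), of k] assms(1,3,4) unfolding C_def by simp
  have CC: "C < C'" using assms(2-4) unfolding C_def C'_def by simp
  have C'pos: "0 < C'" using Cpos CC by simp
  define u where "u = C' *\<^sub>R XT x \<theta>"
  define L where "L = (\<lambda>v. (\<Sum>i\<in>UNIV. \<bar>y i - v \<bullet> x i\<bar>))"
  have thf: "dual_feasible \<theta>" using assms(6) by (simp add: dual_opt_def C'_def)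
  have VI: "\<forall>\<eta>. dual_feasible \<eta> \<longrightarrow> (\<Sum>j\<in>UNIV. (u \<bullet> x j - y j) * (\<eta> j - \<theta> j)) \<ge> 0"
    using dual_VI[OF assms(6)[folded C'_def] C'pos] unfolding u_def by blast
  define s where "s = (\<lambda>j. - sgn (u \<bullet> x j - y j))"
  have sf: "dual_feasible s" by (auto simp: s_def dual_feasible_def sgn_if)
  have "(\<Sum>j\<in>UNIV. (u \<bullet> x j - y j) * (s j - \<theta> j)) \<ge> 0" using VI sf by blast
  hence s1: "(\<Sum>j\<in>UNIV. (u \<bullet> x j - y j) * \<theta> j) \<le> (\<Sum>j\<in>UNIV. (u \<bullet> x j - y j) * s j)"
    by (simp add: right_diff_distrib sum_subtractf)
  have s2: "(\<Sum>j\<in>UNIV. (u \<bullet> x j - y j) * s j) = - L u"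
    unfolding L_def s_def by (simp add: sum_negf[symmetric]) (rule sum.cong; auto simp: sgn_if)
  have s3: "(\<Sum>j\<in>UNIV. \<theta> j * (y j - w \<bullet> x j)) \<le> L w"
    unfolding L_def
  proof (rule sum_mono)
    fix j
    have "\<bar>\<theta> j\<bar> \<le> 1" using thf unfolding dual_feasible_def by (simp add: abs_le_iff)
    hence "\<bar>\<theta> j * (y j - w \<bullet> x j)\<bar> \<le> \<bar>y j - w \<bullet> x j\<bar>"
      by (simp add: abs_mult mult_left_le_one_le)
    thus "\<theta> j * (y j - w \<bullet> x j) \<le> \<bar>y j - w \<bullet> x j\<bar>" by simp
  qed
  have uu: "inner u (u - w) = C' * (\<Sum>j\<in>UNIV. \<theta> j * (inner (u - w) (x j)))"
  proof -
    have g: "\<And>v. inner v (C' *\<^sub>R XT x \<theta>) = C' * (\<Sum>j\<in>UNIV. \<theta> j * inner v (x j))"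
      by (simp add: XT_inner)
    have "inner u (u - w) = inner (u - w) u" by (rule inner_commute)
    also have "\<dots> = C' * (\<Sum>j\<in>UNIV. \<theta> j * inner (u - w) (x j))"
      using g[of "u - w"] unfolding u_def[symmetric] .
    finally show ?thesis .
  qed
  have "(\<Sum>j\<in>UNIV. \<theta> j * (inner (u - w) (x j)))
      = (\<Sum>j\<in>UNIV. (u \<bullet> x j - y j) * \<theta> j) + (\<Sum>j\<in>UNIV. \<theta> j * (y j - w \<bullet> x j))"
    by (simp add: sum.distrib[symmetric] inner_diff_left algebra_simps)
  hence P1: "inner u (u - w) \<le> C' * (L w - L u)"
    using s1 s2 s3 uu C'pos by (simp add: mult_left_mono)
  have P2: "C * (L w - L u) \<le> inner w (u - w)"
    using primal_VI[OF assms(5)[folded C_def] Cpos, of u] unfolding L_def by simp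
  have "C * inner u (u - w) \<le> C * (C' * (L w - L u))" using P1 Cpos by simp
  also have "\<dots> = C' * (C * (L w - L u))" by simp
  also have "\<dots> \<le> C' * inner w (u - w)" using P2 C'pos by simp
  finally have P: "C * inner u (u - w) - C' * inner w (u - w) \<le> 0" by simp
  define b where "b = (C'/C) *\<^sub>R w"
  have "inner (u - b) (u - w) = (C * inner u (u - w) - C' * inner w (u - w)) / C"
    using Cpos by (simp add: b_def inner_diff_left field_simps)
  hence ub: "inner (u - w) (u - b) \<le> 0" using P Cpos
    by (simp add: inner_commute divide_nonpos_pos)
  define c where "c = (1/2) *\<^sub>R (w + b)"
  have "(norm (u - c))^2 \<le> (norm (w - b))^2 / 4"
    using ball_id[of u w b] ub unfolding c_def by simp
  hence "(norm (u - c))^2 \<le> (norm (w - b) / 2)^2" by (simp add: power_divide)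
  hence nc: "norm (u - c) \<le> norm (w - b) / 2"
    by (rule power2_le_imp_le) simp
  have wb: "norm (w - b) / 2 = (C' - C) / (2 * C) * norm w"
  proof -
    have "w - b = (1 - C'/C) *\<^sub>R w" by (simp add: b_def algebra_simps)
    hence "norm (w - b) = \<bar>1 - C'/C\<bar> * norm w" by simp
    moreover have "\<bar>1 - C'/C\<bar> = (C' - C)/C" using Cpos CC by (simp add: field_simps)
    ultimately show ?thesis by simp
  qed
  have cc: "c = ((C' + C) / (2 * C)) *\<^sub>R w"
    using Cpos by (simp add: c_def b_def scaleR_add_left[symmetric] field_simps)
  show ?thesis
  proof (intro allI conjI impI)
    fix i
    have cs: "\<bar>inner (u - c) (x i)\<bar> \<le> norm (u - c) * norm (x i)" by (rule Cauchy_Schwarz_ineq2)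
    have nb: "norm (u - c) * norm (x i) \<le> (C' - C) / (2 * C) * norm w * norm (x i)"
    proof -
      have n1: "norm (u - c) \<le> (C' - C) / (2 * C) * norm w" using nc wb by linarith
      show ?thesis by (rule mult_right_mono[OF n1 norm_ge_zero])
    qed
    have ux: "u \<bullet> x i = (C' + C) / (2 * C) * (w \<bullet> x i) + inner (u - c) (x i)"
      by (simp add: cc inner_diff_left)
    {
      assume h: "(Cs (Suc k) + Cs k) / (2 * Cs k) * (w \<bullet> x i)
         - (Cs (Suc k) - Cs k) / (2 * Cs k) * norm w * norm (x i) > y i"
      have g: "u \<bullet> x i - y i > 0" using h cs nb ux unfolding C_def C'_def by linarith
      have "(u \<bullet> x i - y i) * (-1 - \<theta> i) \<ge> 0"
        using VI_single[OF VI _ _ thf, of "-1" i] by simp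
      hence "-1 - \<theta> i \<ge> 0" using g by (simp add: zero_le_mult_iff)
      moreover have "-1 \<le> \<theta> i" using thf unfolding dual_feasible_def by blast
      ultimately show "\<theta> i = -1" by linarith
    }
    {
      assume h: "(Cs (Suc k) + Cs k) / (2 * Cs k) * (w \<bullet> x i)
         + (Cs (Suc k) - Cs k) / (2 * Cs k) * norm w * norm (x i) < y i"
      have g: "u \<bullet> x i - y i < 0" using h cs nb ux unfolding C_def C'_def by linarith
      have "(u \<bullet> x i - y i) * (1 - \<theta> i) \<ge> 0"
        using VI_single[OF VI _ _ thf, of 1 i] by simp
      hence "1 - \<theta> i \<le> 0" using g by (simp add: zero_le_mult_iff)
      moreover have "\<theta> i \<le> 1" using thf unfolding dual_feasible_def by blast
      ultimately show "\<theta> i = 1" by linarith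
    }
  qed
qed

end
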